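(* Let $T$ be a bounded operator on $C([0,\omega_1])$ such that $T\neq\widetilde{P}_\sigma T\widetilde{P}_\sigma$ for every countable ordinal $\sigma$. Then there is $\epsilon>0$ such that for each countable ordinal $\xi$ there exists $f\in C([0,\omega_1])$ with $\operatorname{supp}(f)\subseteq(\xi,\omega_1)$, $\|f\|\le1$ and $\|Tf\|\ge\epsilon$.
   Context: $\omega_1$ is the first uncountable ordinal; $[0,\omega_1]$ has the order topology and $C([0,\omega_1])$ is the Banach space of continuous scalar-valued functions with sup norm. $\operatorname{supp}(f)=\{k: f(k)\neq0\}$. For a countable ordinal $\sigma$, $\widetilde{P}_\sigma f=f\cdot\mathbf{1}_{[0,\sigma]}+f(\omega_1)\mathbf{1}_{[\sigma+1,\omega_1]}$. *)

theory Defs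
  imports "HOL-Analysis.Analysis"
begin

text \<open>Model of the ordinal interval [0,omega_1]: a well-ordered type (with its order
topology) having a greatest element omega_1, which is uncountable, and in which every
element other than the greatest one has only countably many predecessors. Any such type
is order-isomorphic to [0,omega_1]; the elements below the greatest one are exactly
the countable ordinals.\<close>

definition omega1_interval :: "'a::{wellorder,linorder_topology} itself \<Rightarrow> bool" where
  "omega1_interval _ \<longleftrightarrow>
     (\<exists>t::'a. \<forall>x. x \<le> t) \<and>
     uncountable (UNIV :: 'a set) \<and>
     (\<forall>x::'a. (\<exists>y. x < y) \<longrightarrow> countable {..x})"

definition om1 :: "'a::wellorder" where
  "om1 = (GREATEST x. True)"

definition Cspace :: "('a::topological_space \<Rightarrow> 'k::real_normed_field) set" where
  "Cspace = {f. continuous_on UNIV f}"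

definition supnorm :: "('a \<Rightarrow> 'k::real_normed_field) \<Rightarrow> real" where
  "supnorm f = (SUP x. norm (f x))"

definition supp :: "('a \<Rightarrow> 'k::zero) \<Rightarrow> 'a set" where
  "supp f = {k. f k \<noteq> 0}"

definition bounded_op :: "(('a::topological_space \<Rightarrow> 'k::real_normed_field) \<Rightarrow> ('a \<Rightarrow> 'k)) \<Rightarrow> bool" where
  "bounded_op T \<longleftrightarrow>
     (\<forall>f\<in>Cspace. T f \<in> Cspace) \<and>
     (\<forall>f\<in>Cspace. \<forall>g\<in>Cspace. T (\<lambda>x. f x + g x) = (\<lambda>x. T f x + T g x)) \<and>
     (\<forall>c. \<forall>f\<in>Cspace. T (\<lambda>x. c * f x) = (\<lambda>x. c * T f x)) \<and>
     (\<exists>K. \<forall>f\<in>Cspace. supnorm (T f) \<le> K * supnorm f)"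

definition Ptil :: "'a::wellorder \<Rightarrow> ('a \<Rightarrow> 'k::zero) \<Rightarrow> ('a \<Rightarrow> 'k)" where
  "Ptil \<sigma> f = (\<lambda>k. if k \<le> \<sigma> then f k else f om1)"

end

theory Submission
  imports Defs
begin


lemma om1_greatest:
  assumes "omega1_interval TYPE('a::{wellorder,linorder_topology})"
  shows "(x::'a) \<le> om1"
proof -
  from assms obtain t::'a where t: "\<forall>x. x \<le> t" unfolding omega1_interval_def by blast
  have "om1 = t" unfolding om1_def by (rule Greatest_equality) (use t in auto)
  with t show ?thesis by simp
qed

lemma countable_bound:
  assumes "omega1_interval TYPE('a::{wellorder,linorder_topology})"
    and "countable A" and "\<forall>a\<in>A. (a::'a) < om1"
  shows "\<exists>b<om1. \<forall>a\<in>A. a < b"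
proof -
  have c: "\<forall>x::'a. (\<exists>y. x < y) \<longrightarrow> countable {..x}" and u: "uncountable (UNIV::'a set)"
    using assms(1) unfolding omega1_interval_def by auto
  let ?U = "(\<Union>a\<in>A. {..a}) \<union> {om1}"
  have "countable ?U" using assms(2,3) c by auto
  then obtain b where b: "b \<notin> ?U" using u
    by (metis UNIV_eq_I countable_subset subset_UNIV)
  show ?thesis
  proof (intro exI conjI ballI)
    show "b < om1" using b om1_greatest[OF assms(1), of b] by (auto simp: order.order_iff_strict)
    fix a assume "a \<in> A" then show "a < b" using b by (meson UN_I atMost_iff not_le_imp_less UnI1)
  qed
qed

lemma open_atMost_om1:
  assumes "omega1_interval TYPE('a::{wellorder,linorder_topology})" and "(\<beta>::'a) < om1"
  shows "open {..\<beta>}"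
proof -
  let ?c = "LEAST y. \<beta> < y"
  have bc: "\<beta> < ?c" by (rule LeastI) (use assms in blast)
  have "{..\<beta>} = {..<?c}"
  proof (intro set_eqI iffI)
    fix x assume "x \<in> {..\<beta>}" then show "x \<in> {..<?c}" using bc by auto
  next
    fix x assume "x \<in> {..<?c}" then have "x < ?c" by simp
    then have "\<not> \<beta> < x" using not_less_Least by blast
    then show "x \<in> {..\<beta>}" by simp
  qed
  then show ?thesis by simp
qed

lemma cont_if:
  assumes "omega1_interval TYPE('a::{wellorder,linorder_topology})" and "(\<beta>::'a) < om1"
    and "continuous_on UNIV f" and "continuous_on UNIV g"
  shows "continuous_on UNIV (\<lambda>x. if x \<le> \<beta> then f x else g x)"
proof -
  have e: "UNIV = {..\<beta>} \<union> {\<beta><..}" by auto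
  have "continuous_on ({..\<beta>} \<union> {\<beta><..}) (\<lambda>x. if x \<le> \<beta> then f x else g x)"
    apply (rule continuous_on_cases_local_open)
    using open_atMost_om1[OF assms(1,2)] assms(3,4)
    by (auto simp flip: e intro: continuous_on_subset)
  then show ?thesis by (simp flip: e)
qed

inductive_set stepf :: "'a::wellorder set \<Rightarrow> ('a \<Rightarrow> 'k::real_normed_field) set" for A where
  zero: "(\<lambda>x. 0) \<in> stepf A"
| step: "h \<in> stepf A \<Longrightarrow> b \<in> A \<Longrightarrow> (\<lambda>x. h x + c * (if x \<le> b then 1 else 0)) \<in> stepf A"

lemma stepf_mono: "h \<in> stepf A \<Longrightarrow> A \<subseteq> B \<Longrightarrow> h \<in> stepf B"
  by (induction rule: stepf.induct) (auto intro: stepf.intros)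

lemma stepf_zero_beyond: "h \<in> stepf A \<Longrightarrow> \<forall>a\<in>A. a < y \<Longrightarrow> h y = 0"
  by (induction rule: stepf.induct) auto

lemma stepf_bounded: "h \<in> stepf A \<Longrightarrow> \<exists>M. \<forall>x. norm (h x) \<le> M"
proof (induction rule: stepf.induct)
  case zero then show ?case by auto
next
  case (step h b c)
  then obtain M where M: "\<forall>x. norm (h x) \<le> M" by blast
  show ?case
  proof (intro exI allI)
    fix x
    have "norm (h x + c * (if x \<le> b then 1 else 0)) \<le> norm (h x) + norm c"
      by (rule order.trans[OF norm_triangle_ineq]) (auto simp: norm_mult)
    moreover have "norm (h x) \<le> M" using M by blast
    ultimately show "norm (h x + c * (if x \<le> b then 1 else 0)) \<le> M + norm c" by linarith
  qed
qed

lemma approx: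
  fixes g :: "'a::{wellorder,linorder_topology} \<Rightarrow> 'k::real_normed_field"
  assumes "continuous_on UNIV g" "\<epsilon> > 0"
  shows "\<exists>h\<in>stepf {..\<beta>}. \<forall>y\<le>\<beta>. norm (g y - h y) \<le> \<epsilon>"
proof (induction \<beta> rule: less_induct)
  case (less \<beta>)
  show ?case
  proof (cases "\<exists>\<alpha>. \<alpha> < \<beta>")
    case False
    let ?h = "\<lambda>x. (\<lambda>x. 0) x + g \<beta> * (if x \<le> \<beta> then 1 else 0)"
    have "?h \<in> stepf {..\<beta>}" by (rule stepf.step[OF stepf.zero]) simp
    moreover have "\<forall>y\<le>\<beta>. norm (g y - ?h y) \<le> \<epsilon>"
    proof (intro allI impI)
      fix y assume "y \<le> \<beta>"
      then have "y < \<beta> \<or> y = \<beta>" by (simp add: le_less)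
      then have "y = \<beta>" using False by blast
      then show "norm (g y - ?h y) \<le> \<epsilon>" using assms(2) by simp
    qed
    ultimately show ?thesis by - (rule bexI[of _ ?h], assumption+)
  next
    case True
    then obtain \<alpha> where "\<alpha> < \<beta>" by blast
    let ?U = "g -` ball (g \<beta>) \<epsilon>"
    have "open ?U" using assms(1) continuous_on_open_vimage[of UNIV g] by auto
    moreover have "\<beta> \<in> ?U" using assms(2) by simp
    ultimately obtain b where b: "b < \<beta>" "{b<..\<beta>} \<subseteq> ?U"
      using open_left[OF _ _ \<open>\<alpha> < \<beta>\<close>] by blast
    from less[OF b(1)] obtain hb where hb: "hb \<in> stepf {..b}" "\<forall>y\<le>b. norm (g y - hb y) \<le> \<epsilon>"
      by blast
    let ?h = "\<lambda>x. (\<lambda>x. hb x + g \<beta> * (if x \<le> \<beta> then 1 else 0)) x + (- g \<beta>) * (if x \<le> b then 1 else 0)"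
    have "hb \<in> stepf {..\<beta>}" using hb(1) by (rule stepf_mono) (use b(1) in auto)
    then have "(\<lambda>x. hb x + g \<beta> * (if x \<le> \<beta> then 1 else 0)) \<in> stepf {..\<beta>}"
      by (rule stepf.step) simp
    then have "?h \<in> stepf {..\<beta>}" by (rule stepf.step) (use b(1) in simp)
    moreover have "\<forall>y\<le>\<beta>. norm (g y - ?h y) \<le> \<epsilon>"
    proof (intro allI impI)
      fix y assume y: "y \<le> \<beta>"
      show "norm (g y - ?h y) \<le> \<epsilon>"
      proof (cases "y \<le> b")
        case True
        then have "?h y = hb y" using y by simp
        then show ?thesis using hb(2) True by metis
      next
        case False
        then have "\<forall>a\<in>{..b}. a < y" by (metis atMost_iff le_less_trans not_le)
        then have "hb y = 0" by (rule stepf_zero_beyond[OF hb(1)])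
        moreover have "y \<in> {b<..\<beta>}" using False y by (simp add: not_le)
        then have "y \<in> ?U" using b(2) by blast
        moreover have "?h y = g \<beta>" using False y \<open>hb y = 0\<close> by simp
        ultimately have "y \<in> ?U" "?h y = g \<beta>" by blast+
        then show ?thesis by (simp add: dist_norm norm_minus_commute)
      qed
    qed
    ultimately show ?thesis by - (rule bexI[of _ ?h], assumption+)
  qed
qed



lemma cont_bdd:
  fixes f :: "'a::{wellorder,linorder_topology} \<Rightarrow> 'k::real_normed_field"
  assumes "omega1_interval TYPE('a)" "f \<in> Cspace"
  shows "norm (f x) \<le> supnorm f"
proof -
  have c: "continuous_on UNIV f" using assms(2) by (simp add: Cspace_def)
  obtain h where h: "h \<in> stepf {..(om1::'a)}" "\<forall>y\<le>om1. norm (f y - h y) \<le> 1"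
    using approx[OF c, of 1 om1] by auto
  obtain M where M: "\<forall>x. norm (h x) \<le> M" using stepf_bounded[OF h(1)] by blast
  have "\<forall>y. norm (f y) \<le> M + 1"
  proof
    fix y
    have "norm (f y) \<le> norm (f y - h y) + norm (h y)" by (metis diff_add_cancel norm_triangle_ineq)
    moreover have "norm (f y - h y) \<le> 1" using h(2) om1_greatest[OF assms(1), of y] by blast
    moreover have "norm (h y) \<le> M" using M by blast
    ultimately show "norm (f y) \<le> M + 1" by linarith
  qed
  then have "bdd_above (range (\<lambda>x. norm (f x)))" by (auto intro: bdd_aboveI2)
  then show ?thesis unfolding supnorm_def by (rule cSUP_upper[OF UNIV_I])
qed

lemma supnorm_le:
  assumes "\<forall>x. norm (f x) \<le> c"
  shows "supnorm f \<le> c"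
  unfolding supnorm_def using assms by (intro cSUP_least) auto

lemma small_zero:
  fixes a :: real
  assumes "\<And>n::nat. a < inverse (real (Suc n))"
  shows "a \<le> 0"
proof (rule ccontr)
  assume "\<not> a \<le> 0"
  then have "\<exists>n. inverse (real (Suc n)) < a" using reals_Archimedean[of a] by simp
  then obtain n where "inverse (real (Suc n)) < a" by blast
  with assms[of n] show False by simp
qed

lemma ev_const:
  fixes f :: "'a::{wellorder,linorder_topology} \<Rightarrow> 'k::real_normed_field"
  assumes om: "omega1_interval TYPE('a)" and "f \<in> Cspace"
  shows "\<exists>\<tau><om1. \<forall>x>\<tau>. f x = f om1"
proof -
  have c: "continuous_on UNIV f" using assms(2) by (simp add: Cspace_def)
  have u: "uncountable (UNIV::'a set)" using om unfolding omega1_interval_def by auto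
  have "UNIV \<noteq> {om1::'a}"
  proof
    assume e: "UNIV = {om1::'a}"
    have "countable {om1::'a}" by simp
    then have "countable (UNIV::'a set)" by (simp only: e)
    with u show False by simp
  qed
  then obtain y::'a where "y \<noteq> om1" by blast
  then have y: "y < om1" using om1_greatest[OF om, of y] le_neq_trans by blast
  have "\<forall>n::nat. \<exists>b<om1. {b<..om1} \<subseteq> f -` ball (f om1) (inverse (real (Suc n)))"
  proof
    fix n :: nat
    have o: "open (f -` ball (f om1) (inverse (real (Suc n))))"
      using c continuous_on_open_vimage[of UNIV f] by auto
    have i: "om1 \<in> f -` ball (f om1) (inverse (real (Suc n)))" by simp
    show "\<exists>b<om1. {b<..om1} \<subseteq> f -` ball (f om1) (inverse (real (Suc n)))"
      by (rule open_left[OF o i y])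
  qed
  then have "\<exists>b. \<forall>n. b n < om1 \<and> {b n<..om1} \<subseteq> f -` ball (f om1) (inverse (real (Suc n)))"
    by (rule choice)
  then obtain b where b: "\<And>n. b n < om1" "\<And>n. {b n<..om1} \<subseteq> f -` ball (f om1) (inverse (real (Suc n)))"
    by blast
  obtain \<tau> where \<tau>: "\<tau> < om1" "\<forall>a\<in>range b. a < \<tau>"
    using countable_bound[OF om, of "range b"] b(1) by blast
  show ?thesis
  proof (intro exI conjI allI impI)
    show "\<tau> < om1" by fact
    fix x assume "\<tau> < x"
    have "x \<in> {b n<..om1}" for n
    proof -
      have "b n < \<tau>" using \<tau>(2) by auto
      then have "b n < x" using \<open>\<tau> < x\<close> by (rule less_trans)
      then show ?thesis using om1_greatest[OF om, of x] by simp
    qed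
    then have "\<And>n. f x \<in> ball (f om1) (inverse (real (Suc n)))" using b(2) by blast
    then have "\<And>n. dist (f om1) (f x) < inverse (real (Suc n))" by simp
    then have "dist (f om1) (f x) \<le> 0" by (rule small_zero)
    then show "f x = f om1" by simp
  qed
qed



theorem lemma4p3:
  fixes T :: "('a::{wellorder,linorder_topology} \<Rightarrow> 'k::real_normed_field) \<Rightarrow> ('a \<Rightarrow> 'k)"
  assumes "omega1_interval TYPE('a)"
    and "bounded_op T"
    and "\<forall>\<sigma>::'a. \<sigma> < om1 \<longrightarrow> (\<exists>f\<in>Cspace. T f \<noteq> Ptil \<sigma> (T (Ptil \<sigma> f)))"
  shows "\<exists>\<epsilon>>0. \<forall>\<xi>::'a. \<xi> < om1 \<longrightarrow>
           (\<exists>f\<in>Cspace. supp f \<subseteq> {\<xi><..<om1} \<and> supnorm f \<le> 1 \<and> supnorm (T f) \<ge> \<epsilon>)"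
proof (rule ccontr)
  assume neg: "\<not> ?thesis"
  note om = assms(1)
  have TC: "\<And>f. f \<in> Cspace \<Longrightarrow> T f \<in> Cspace"
    and Tadd: "\<And>f g. f \<in> Cspace \<Longrightarrow> g \<in> Cspace \<Longrightarrow> T (\<lambda>x. f x + g x) = (\<lambda>x. T f x + T g x)"
    and Tmul: "\<And>c f. f \<in> Cspace \<Longrightarrow> T (\<lambda>x. c * f x) = (\<lambda>x. c * T f x)"
    using assms(2) unfolding bounded_op_def by blast+
  obtain K where K: "\<And>f. f \<in> Cspace \<Longrightarrow> supnorm (T f) \<le> K * supnorm f"
    using assms(2) unfolding bounded_op_def by blast
  have sn0: "0 \<le> supnorm f" if "f \<in> Cspace" for f :: "'a \<Rightarrow> 'k"
    using cont_bdd[OF om that, of om1] norm_ge_zero[of "f om1"] by linarith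
  have TK: "norm (T f x) \<le> \<bar>K\<bar> * supnorm f" if "f \<in> Cspace" for f x
  proof -
    have "norm (T f x) \<le> supnorm (T f)" by (rule cont_bdd[OF om TC[OF that]])
    also have "\<dots> \<le> K * supnorm f" by (rule K[OF that])
    also have "\<dots> \<le> \<bar>K\<bar> * supnorm f" using sn0[OF that] by (simp add: mult_right_mono)
    finally show ?thesis .
  qed
  have constC: "(\<lambda>x. c) \<in> Cspace" for c :: 'k by (simp add: Cspace_def)
  have T0: "T (\<lambda>x. 0) = (\<lambda>x. 0)"
    using Tmul[OF constC[of 0], of 0] by simp
  have "\<exists>\<xi><om1. \<forall>f\<in>Cspace. supp f \<subseteq> {\<xi><..<om1} \<longrightarrow> supnorm f \<le> 1 \<longrightarrow> supnorm (T f) < e"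
    if "e > 0" for e
    using neg that by (meson not_le)
  then have "\<forall>n::nat. \<exists>\<xi>. \<xi> < om1 \<and> (\<forall>f\<in>Cspace. supp f \<subseteq> {\<xi><..<om1} \<longrightarrow> supnorm f \<le> 1 \<longrightarrow> supnorm (T f) < inverse (real (Suc n)))"
    by simp
  then have "\<exists>xi. \<forall>n::nat. xi n < om1 \<and> (\<forall>f\<in>Cspace. supp f \<subseteq> {xi n<..<om1} \<longrightarrow> supnorm f \<le> 1 \<longrightarrow> supnorm (T f) < inverse (real (Suc n)))"
    by (rule choice)
  then obtain xi where xi1: "\<And>n. xi n < om1"
    and xi2: "\<And>n f. f\<in>Cspace \<Longrightarrow> supp f \<subseteq> {xi n<..<om1} \<Longrightarrow> supnorm f \<le> 1 \<Longrightarrow> supnorm (T f) < inverse (real (Suc n))"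
    by blast
  obtain \<xi> where \<xi>: "\<xi> < om1" "\<forall>a\<in>range xi. a < \<xi>"
    using countable_bound[OF om, of "range xi"] xi1 by blast
  have claimA: "T f = (\<lambda>x. 0)" if fC: "f \<in> Cspace" and fs: "supp f \<subseteq> {\<xi><..<om1}" for f
  proof -
    define c where "c = supnorm f + 1"
    have c0: "c > 0" using sn0[OF fC] by (simp add: c_def)
    define f' where "f' = (\<lambda>x. inverse (of_real c) * f x)"
    have f'C: "f' \<in> Cspace" unfolding f'_def
      using fC Tmul by (simp add: Cspace_def continuous_on_mult_left)
    have f'n: "supnorm f' \<le> 1"
    proof (rule supnorm_le, rule allI)
      fix x
      have "norm (f' x) = norm (f x) / c" using c0 by (simp add: f'_def norm_mult norm_inverse divide_inverse_commute)
      also have "\<dots> \<le> 1" using cont_bdd[OF om fC, of x] c0 by (simp add: c_def)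
      finally show "norm (f' x) \<le> 1" .
    qed
    have f's: "supp f' \<subseteq> {xi n<..<om1}" for n
    proof
      fix k assume "k \<in> supp f'"
      then have "k \<in> supp f" by (simp add: supp_def f'_def)
      then have "\<xi> < k" "k < om1" using fs by auto
      moreover have "xi n < \<xi>" using \<xi>(2) by simp
      ultimately have "xi n < k" "k < om1" using less_trans by blast+
      then show "k \<in> {xi n<..<om1}" by simp
    qed
    have Tf'0: "T f' x = 0" for x
    proof -
      have "norm (T f' x) < inverse (real (Suc n))" for n
        using cont_bdd[OF om TC[OF f'C], of x] xi2[OF f'C f's f'n, of n] by linarith
      then have "norm (T f' x) \<le> 0" by (rule small_zero)
      then show ?thesis by simp
    qed
    have cn: "(of_real c :: 'k) \<noteq> 0" using c0 by simp
    have "f = (\<lambda>x. of_real c * f' x)"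
      unfolding f'_def mult.assoc[symmetric] right_inverse[OF cn] by simp
    then have "T f = (\<lambda>x. of_real c * T f' x)" using Tmul[OF f'C] by simp
    then show ?thesis using Tf'0 by simp
  qed
  have PC: "Ptil \<sigma> f \<in> Cspace" if "\<sigma> < om1" "f \<in> Cspace" for \<sigma> and f :: "'a \<Rightarrow> 'k"
    unfolding Ptil_def Cspace_def mem_Collect_eq
    by (rule cont_if[OF om that(1)]) (use that(2) in \<open>simp_all add: Cspace_def\<close>)
  have claimB: "T f = T (Ptil \<xi> f)" if fC: "f \<in> Cspace" for f
  proof -
    define d where "d = (\<lambda>x. f x - Ptil \<xi> f x)"
    have dC: "d \<in> Cspace" unfolding d_def using fC PC[OF \<xi>(1) fC]
      by (simp add: Cspace_def continuous_on_diff)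
    have ds: "supp d \<subseteq> {\<xi><..<om1}"
    proof
      fix k assume "k \<in> supp d"
      then have "d k \<noteq> 0" by (simp add: supp_def)
      then have "\<not> k \<le> \<xi>" "k \<noteq> om1" by (auto simp: d_def Ptil_def)
      then show "k \<in> {\<xi><..<om1}" using om1_greatest[OF om, of k] by (simp add: not_le)
    qed
    have "f = (\<lambda>x. Ptil \<xi> f x + d x)" by (simp add: d_def)
    then have "T f = (\<lambda>x. T (Ptil \<xi> f) x + T d x)" using Tadd[OF PC[OF \<xi>(1) fC] dC] by simp
    then show ?thesis using claimA[OF dC ds] by simp
  qed
  define ind where "ind = (\<lambda>b::'a. \<lambda>x::'a. if x \<le> b then (1::'k) else 0)"
  define A where "A = insert om1 {..\<xi>}"
  have cA: "countable A"
  proof -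
    have "countable {..\<xi>}" using om \<xi>(1) unfolding omega1_interval_def by blast
    then show ?thesis by (simp add: A_def)
  qed
  have indC: "ind b \<in> Cspace" if "b \<in> A" for b
  proof (cases "b = om1")
    case True
    then have "ind b = (\<lambda>x. 1)" using om1_greatest[OF om] by (simp add: ind_def)
    then show ?thesis using constC by simp
  next
    case False
    then have "b \<le> \<xi>" using that by (simp add: A_def)
    then have "b < om1" using \<xi>(1) by (rule le_less_trans)
    then show ?thesis unfolding ind_def Cspace_def mem_Collect_eq
      by (rule cont_if[OF om]) (simp_all add: continuous_on_const)
  qed
  have "\<forall>b\<in>A. \<exists>t. t < om1 \<and> (\<forall>x>t. T (ind b) x = T (ind b) om1)"
    using ev_const[OF om TC[OF indC]] by blast
  then obtain tb where tb: "\<And>b. b \<in> A \<Longrightarrow> tb b < om1"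
    "\<And>b x. b \<in> A \<Longrightarrow> tb b < x \<Longrightarrow> T (ind b) x = T (ind b) om1"
    by metis
  obtain \<tau> where \<tau>: "\<tau> < om1" "\<forall>a\<in>insert \<xi> (tb ` A). a < \<tau>"
    using countable_bound[OF om, of "insert \<xi> (tb ` A)"] cA tb(1) \<xi>(1) by blast
  have stepC: "h \<in> Cspace \<and> (\<forall>x>\<tau>. T h x = T h om1)" if "h \<in> stepf A" for h
    using that
  proof (induction rule: stepf.induct)
    case zero then show ?case using constC T0 by simp
  next
    case (step h b c)
    have icC: "(\<lambda>x. c * ind b x) \<in> Cspace" using indC[OF step(2)]
      by (simp add: Cspace_def continuous_on_mult_left)
    have e: "(\<lambda>x. h x + c * (if x \<le> b then 1 else 0)) = (\<lambda>x. h x + (\<lambda>x. c * ind b x) x)"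
      by (simp add: ind_def)
    have Te: "T (\<lambda>x. h x + (\<lambda>x. c * ind b x) x) = (\<lambda>x. T h x + c * T (ind b) x)"
      using Tadd[OF conjunct1[OF step(3)] icC] Tmul[OF indC[OF step(2)]] by simp
    have C1: "(\<lambda>x. h x + (\<lambda>x. c * ind b x) x) \<in> Cspace"
      using conjunct1[OF step(3)] icC by (simp add: Cspace_def continuous_on_add)
    have tbt: "tb b < \<tau>" using \<tau>(2) step(2) by blast
    have C2: "T (\<lambda>x. h x + (\<lambda>x. c * ind b x) x) x = T (\<lambda>x. h x + (\<lambda>x. c * ind b x) x) om1"
      if "\<tau> < x" for x
    proof -
      have "tb b < x" using tbt that by (rule less_trans)
      then have "T (ind b) x = T (ind b) om1" by (rule tb(2)[OF step(2)])
      moreover have "T h x = T h om1" using conjunct2[OF step(3)] that by blast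
      ultimately show ?thesis unfolding Te by simp
    qed
    show ?case unfolding e using C1 C2 by blast
  qed
  have claimC: "T g x = T g om1" if gC: "g \<in> Cspace" and gc: "\<forall>y>\<xi>. g y = g om1" and x: "\<tau> < x" for g x
  proof -
    have "norm (T g x - T g om1) \<le> (2 * \<bar>K\<bar>) * e" if e0: "e > 0" for e
    proof -
      obtain h where h: "h \<in> stepf {..\<xi>}" "\<forall>y\<le>\<xi>. norm (g y - h y) \<le> e"
        using approx[of g e \<xi>] gC e0 by (auto simp: Cspace_def)
      have hA: "h \<in> stepf A" using h(1) by (rule stepf_mono) (auto simp: A_def)
      define h1 where "h1 = (\<lambda>x. h x + g om1 * (if x \<le> om1 then 1 else 0))"
      define h' where "h' = (\<lambda>x. h1 x + (- g om1) * (if x \<le> \<xi> then 1 else 0))"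
      have "h1 \<in> stepf A" unfolding h1_def using hA by (rule stepf.step) (simp add: A_def)
      then have h'A: "h' \<in> stepf A" unfolding h'_def by (rule stepf.step) (simp add: A_def)
      have app: "norm (g y - h' y) \<le> e" for y
      proof (cases "y \<le> \<xi>")
        case True
        then have "h' y = h y" using om1_greatest[OF om, of y] by (simp add: h'_def h1_def)
        then show ?thesis using h(2) True by metis
      next
        case False
        then have "\<forall>a\<in>{..\<xi>}. a < y" by (metis atMost_iff le_less_trans not_le)
        then have "h y = 0" by (rule stepf_zero_beyond[OF h(1)])
        then have "h' y = g om1" using False om1_greatest[OF om, of y] by (simp add: h'_def h1_def)
        moreover have "g y = g om1" using gc False by (simp add: not_le)
        ultimately show ?thesis using e0 by simp
      qed
      define d where "d = (\<lambda>y. g y - h' y)"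
      have h'C: "h' \<in> Cspace" "\<forall>x>\<tau>. T h' x = T h' om1" using stepC[OF h'A] by blast+
      have dC: "d \<in> Cspace" unfolding d_def using gC h'C(1) by (simp add: Cspace_def continuous_on_diff)
      have dn: "supnorm d \<le> e" unfolding d_def using app by (intro supnorm_le) simp
      have "g = (\<lambda>y. h' y + d y)" by (simp add: d_def)
      then have Tg: "T g = (\<lambda>y. T h' y + T d y)" using Tadd[OF h'C(1) dC] by simp
      have "T g x - T g om1 = T d x - T d om1" using h'C(2) x by (simp add: Tg)
      then have "norm (T g x - T g om1) \<le> norm (T d x) + norm (T d om1)"
        by (simp add: norm_triangle_ineq4)
      also have "\<dots> \<le> \<bar>K\<bar> * supnorm d + \<bar>K\<bar> * supnorm d" by (rule add_mono[OF TK[OF dC] TK[OF dC]])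
      also have "\<dots> \<le> (2 * \<bar>K\<bar>) * e" using mult_left_mono[OF dn abs_ge_zero[of K]] by (simp add: mult.commute)
      finally show ?thesis .
    qed
    then have "norm (T g x - T g om1) \<le> 0"
    proof -
      assume H: "\<And>e. e > 0 \<Longrightarrow> norm (T g x - T g om1) \<le> (2 * \<bar>K\<bar>) * e"
      show ?thesis
      proof (rule ccontr)
        assume "\<not> norm (T g x - T g om1) \<le> 0"
        then have a0: "norm (T g x - T g om1) > 0" by simp
        define a where "a = norm (T g x - T g om1)"
        have "a \<le> (2 * \<bar>K\<bar>) * (a / (2 * \<bar>K\<bar> + 1))" using H[of "a / (2 * \<bar>K\<bar> + 1)"] a0
          by (simp add: a_def)
        also have "\<dots> < a" using a0 by (simp add: a_def field_simps)
        finally show False by simp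
      qed
    qed
    then show ?thesis by simp
  qed
  have "T f = Ptil \<tau> (T (Ptil \<tau> f))" if fC: "f \<in> Cspace" for f
  proof -
    have \<xi>\<tau>: "\<xi> < \<tau>" using \<tau>(2) by blast
    have PtC: "Ptil \<tau> f \<in> Cspace" by (rule PC[OF \<tau>(1) fC])
    have "Ptil \<xi> (Ptil \<tau> f) = Ptil \<xi> f"
    proof
      fix k
      show "Ptil \<xi> (Ptil \<tau> f) k = Ptil \<xi> f k"
        using \<xi>\<tau> \<tau>(1) by (auto simp: Ptil_def not_le)
    qed
    then have e1: "T (Ptil \<tau> f) = T f" using claimB[OF PtC] claimB[OF fC] by simp
    define g where "g = Ptil \<xi> f"
    have gC: "g \<in> Cspace" unfolding g_def by (rule PC[OF \<xi>(1) fC])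
    have gc: "\<forall>y>\<xi>. g y = g om1" using \<xi>(1) by (auto simp: g_def Ptil_def not_le)
    have Tfg: "T f = T g" unfolding g_def by (rule claimB[OF fC])
    have "Ptil \<tau> (T g) = T g"
    proof
      fix k
      show "Ptil \<tau> (T g) k = T g k"
        using claimC[OF gC gc, of k] by (auto simp: Ptil_def not_le)
    qed
    then show ?thesis using e1 Tfg by simp
  qed
  then show False using assms(3) \<tau>(1) by blast
qed


end
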